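(* Let $X$ be a random vector in $\mathbb{R}^d$ with finite mean, and let $X_1, \dots, X_n$ be $n$ independent copies of $X$. Let $\lambda, \mu, \beta > 0$ and $\delta \in (0,1)$. Define $Y = \frac{\psi(\lambda \lVert X \rVert)}{\lambda \lVert X \rVert} X$, $Y_i = \frac{\psi(\lambda \lVert X_i \rVert)}{\lambda \lVert X_i \rVert} X_i$, where $\psi(t) = \min\{t,1\}$ for $t \geq 0$, and let $\widetilde{m} = \mathbb{E}(Y)$ and $\widehat{m} = \frac{1}{n}\sum_{i=1}^n Y_i$. Then with probability at least $1 - \delta$, for any $\theta \in \mathbb{S}_d = \{\theta \in \mathbb{R}^d : \lVert \theta \rVert = 1\}$, \[ \langle \theta, \widehat{m} - \widetilde{m} \rangle = \frac{1}{n}\sum_{i=1}^n \langle \theta, Y_i - \widetilde{m} \rangle \leq g_2(2\mu) \frac{\mu \lambda}{2} \mathbb{E}\bigl( \langle \theta, Y - \widetilde{m} \rangle^2 \bigr) + \exp(2\mu)\, g_1\biggl( \frac{2\mu^2}{\beta} \biggr) \frac{\mu \lambda}{2 \beta} \mathbb{E}\bigl( \lVert Y - \widetilde{m} \rVert^2 \bigr) + \frac{\beta + 2 \log(\delta^{-1})}{2 \mu \lambda n}. \]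
   Context: $\lVert \cdot \rVert$ and $\langle \cdot, \cdot \rangle$ are the Euclidean norm and inner product on $\mathbb{R}^d$. The functions $g_1(t) = \frac{1}{t}(\exp(t) - 1)$ and $g_2(t) = \frac{2}{t^2}(\exp(t) - 1 - t)$, $t \in \mathbb{R}$, are extended by continuity at $t = 0$ with $g_1(0) = g_2(0) = 1$. The factor $\frac{\psi(\lambda \lVert x \rVert)}{\lambda \lVert x \rVert}$ is taken to be $1$ when $x = 0$, so that $Y$ is the projection of $X$ onto the closed ball of radius $1/\lambda$ centred at $0$. *)

theory Defs
  imports "HOL-Probability.Probability"
begin

definition g1 :: "real \<Rightarrow> real" where
  "g1 t = (if t = 0 then 1 else (exp t - 1) / t)"

definition g2 :: "real \<Rightarrow> real" where
  "g2 t = (if t = 0 then 1 else 2 * (exp t - 1 - t) / t\<^sup>2)"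

definition psi :: "real \<Rightarrow> real" where
  "psi t = min t 1"

definition thresh :: "real \<Rightarrow> 'a::real_normed_vector \<Rightarrow> 'a" where
  "thresh lam x = (if x = 0 then x else (psi (lam * norm x) / (lam * norm x)) *\<^sub>R x)"

end

theory Submission
  imports Defs
begin


lemma k_nonneg:
  fixes t :: real assumes "0 \<le> t"
  shows "0 \<le> (t - 2) * exp t + t + 2"
proof -
  have d: "0 \<le> (x - 1) * exp x + 1" for x :: real
  proof -
    have "1 - x \<le> exp (-x)" using exp_ge_add_one_self[of "-x"] by simp
    then have "(1 - x) * exp x \<le> exp (-x) * exp x" by (intro mult_right_mono) auto
    then show ?thesis by (simp add: exp_minus field_simps)
  qed
  have "(\<lambda>x. (x - 2) * exp x + x + 2) 0 \<le> (\<lambda>x. (x - 2) * exp x + x + 2) t"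
  proof (rule deriv_nonneg_imp_mono[where g="\<lambda>x. (x - 2) * exp x + x + 2" and g'="\<lambda>x. (x - 1) * exp x + 1"])
    fix x :: real
    show "((\<lambda>x. (x - 2) * exp x + x + 2) has_real_derivative (x - 1) * exp x + 1) (at x)"
      by (auto intro!: derivative_eq_intros simp: algebra_simps)
  qed (use d assms in auto)
  then show ?thesis by simp
qed

lemma h_mono:
  fixes s c :: real assumes "0 < s" "s \<le> c"
  shows "(exp s - 1 - s) / s\<^sup>2 \<le> (exp c - 1 - c) / c\<^sup>2"
proof -
  have "(\<lambda>x. (exp x - 1 - x) / x\<^sup>2) s \<le> (\<lambda>x. (exp x - 1 - x) / x\<^sup>2) c"
  proof (rule deriv_nonneg_imp_mono[where g="\<lambda>x. (exp x - 1 - x) / x\<^sup>2" and g'="\<lambda>x. ((x - 2) * exp x + x + 2) / x ^ 3"])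
    fix x assume x: "x \<in> {s..c}"
    then have "x > 0" using assms by auto
    then show "((\<lambda>x. (exp x - 1 - x) / x\<^sup>2) has_real_derivative ((x - 2) * exp x + x + 2) / x ^ 3) (at x)"
      by (auto intro!: derivative_eq_intros simp: field_simps power2_eq_square power3_eq_cube)
    show "0 \<le> ((x - 2) * exp x + x + 2) / x ^ 3"
      using k_nonneg[of x] \<open>x > 0\<close> by simp
  qed (use assms in auto)
  then show ?thesis by simp
qed

lemma exp_le_neg:
  fixes s :: real assumes "s \<le> 0"
  shows "exp s \<le> 1 + s + s\<^sup>2 / 2"
proof -
  have "(\<lambda>x. 1 + x + x\<^sup>2 / 2 - exp x) 0 \<le> (\<lambda>x. 1 + x + x\<^sup>2 / 2 - exp x) s"
  proof (rule deriv_nonpos_imp_antimono[where g="\<lambda>x. 1 + x + x\<^sup>2 / 2 - exp x" and g'="\<lambda>x. 1 + x - exp x"])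
    fix x :: real
    show "((\<lambda>x. 1 + x + x\<^sup>2 / 2 - exp x) has_real_derivative 1 + x - exp x) (at x)"
      by (auto intro!: derivative_eq_intros)
    show "1 + x - exp x \<le> 0" using exp_ge_add_one_self[of x] by linarith
  qed (use assms in auto)
  then show ?thesis by simp
qed

lemma exp_ge_quad:
  fixes s :: real assumes "0 \<le> s"
  shows "1 + s + s\<^sup>2 / 2 \<le> exp s"
proof -
  have "(\<lambda>x. exp x - 1 - x - x\<^sup>2 / 2) 0 \<le> (\<lambda>x. exp x - 1 - x - x\<^sup>2 / 2) s"
  proof (rule deriv_nonneg_imp_mono[where g="\<lambda>x. exp x - 1 - x - x\<^sup>2 / 2" and g'="\<lambda>x. exp x - 1 - x"])
    fix x assume "x \<in> {0..s}"
    show "((\<lambda>x. exp x - 1 - x - x\<^sup>2 / 2) has_real_derivative exp x - 1 - x) (at x)"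
      by (auto intro!: derivative_eq_intros)
    show "0 \<le> exp x - 1 - x" using exp_ge_add_one_self[of x] by linarith
  qed (use assms in auto)
  then show ?thesis by simp
qed

lemma g2_ge1: "0 < c \<Longrightarrow> 1 \<le> g2 c"
  using exp_ge_quad[of c] by (auto simp: g2_def field_simps)

lemma exp_g2:
  fixes s c :: real assumes "0 < c" "s \<le> c"
  shows "exp s \<le> 1 + s + g2 c * s\<^sup>2 / 2"
proof (cases "s \<le> 0")
  case True
  have "s\<^sup>2 / 2 \<le> g2 c * s\<^sup>2 / 2" using g2_ge1[OF assms(1)]
    using mult_right_mono[of 1 "g2 c" "s\<^sup>2"] by simp
  with exp_le_neg[OF True] show ?thesis by simp
next
  case False
  then have s: "s > 0" by simp
  have "(exp s - 1 - s) / s\<^sup>2 \<le> (exp c - 1 - c) / c\<^sup>2" using h_mono[OF s assms(2)] .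
  then have "exp s - 1 - s \<le> (exp c - 1 - c) / c\<^sup>2 * s\<^sup>2"
    using s by (simp add: divide_le_eq)
  moreover have "g2 c * s\<^sup>2 / 2 = (exp c - 1 - c) / c\<^sup>2 * s\<^sup>2"
    using assms by (simp add: g2_def field_simps)
  ultimately show ?thesis by simp
qed

lemma exp_g1:
  fixes t C :: real assumes "0 < C" "0 \<le> t" "t \<le> C"
  shows "exp t - 1 \<le> g1 C * t"
proof -
  have "exp ((1 - t / C) *\<^sub>R 0 + (t / C) *\<^sub>R C) \<le> (1 - t / C) * exp 0 + (t / C) * exp C"
    using assms by (intro convex_onD[OF exp_convex]) auto
  moreover have "(1 - t / C) *\<^sub>R 0 + (t / C) *\<^sub>R C = t" using assms by simp
  ultimately have "exp t \<le> 1 - t / C + t / C * exp C" by simp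
  moreover have "g1 C * t = t / C * exp C - t / C" using assms by (simp add: g1_def field_simps)
  ultimately show ?thesis by linarith
qed

lemma exp_prod_bound:
  fixes s t mu C :: real assumes "0 < mu" "s \<le> 2 * mu" "0 < C" "0 \<le> t" "t \<le> C"
  shows "exp s * exp t - 1 \<le> s + g2 (2 * mu) * s\<^sup>2 / 2 + exp (2 * mu) * g1 C * t"
proof -
  have "exp s * exp t - 1 = (exp s - 1) + exp s * (exp t - 1)" by (simp add: algebra_simps)
  also have "exp s - 1 \<le> s + g2 (2 * mu) * s\<^sup>2 / 2" using exp_g2[of "2*mu" s] assms by simp
  also have "exp s * (exp t - 1) \<le> exp (2 * mu) * (g1 C * t)"
    using assms exp_g1[of C t] by (intro mult_mono) auto
  finally show ?thesis by (simp add: algebra_simps)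
qed



definition gdens :: "real \<Rightarrow> 'a::euclidean_space \<Rightarrow> real" where
  "gdens b x = sqrt (b / (2 * pi)) ^ DIM('a) * exp (- b * (norm x)\<^sup>2 / 2)"

lemma gdens_pos: "0 < b \<Longrightarrow> 0 < gdens b x"
  by (simp add: gdens_def)

lemma gdens_measurable[measurable]: "gdens b \<in> borel_measurable borel"
  unfolding gdens_def by measurable

lemma gdens_prod:
  fixes x :: "'a::euclidean_space" assumes b: "0 < b"
  shows "(\<Prod>j\<in>Basis. normal_density 0 (1 / sqrt b) (x \<bullet> j)) = gdens b x"
proof -
  have nd: "normal_density 0 (1 / sqrt b) t = sqrt (b / (2 * pi)) * exp (- b * t\<^sup>2 / 2)" for t
    using b by (simp add: normal_density_def real_sqrt_divide power_divide field_simps)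
  have "(\<Prod>j\<in>Basis. normal_density 0 (1 / sqrt b) (x \<bullet> j))
      = (\<Prod>j\<in>(Basis::'a set). sqrt (b / (2 * pi))) * (\<Prod>j\<in>Basis. exp (- b * (x \<bullet> j)\<^sup>2 / 2))"
    by (simp add: nd prod.distrib)
  also have "(\<Prod>j\<in>Basis. exp (- b * (x \<bullet> j)\<^sup>2 / 2)) = exp (\<Sum>j\<in>Basis. - b * (x \<bullet> j)\<^sup>2 / 2)"
    by (simp add: exp_sum)
  also have "(\<Sum>j\<in>(Basis::'a set). - b * (x \<bullet> j)\<^sup>2 / 2) = - b * (norm x)\<^sup>2 / 2"
  proof -
    have "(norm x)\<^sup>2 = x \<bullet> x" by (rule power2_norm_eq_inner)
    also have "\<dots> = (\<Sum>j\<in>(Basis::'a set). (x \<bullet> j) * (x \<bullet> j))" by (rule euclidean_inner)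
    finally have n: "(norm x)\<^sup>2 = (\<Sum>j\<in>(Basis::'a set). (x \<bullet> j)\<^sup>2)"
      by (simp add: power2_eq_square)
    have "(\<Sum>j\<in>(Basis::'a set). - b * (x \<bullet> j)\<^sup>2 / 2) = (\<Sum>j\<in>(Basis::'a set). (- b / 2) * (x \<bullet> j)\<^sup>2)"
      by (intro sum.cong) auto
    also have "\<dots> = (- b / 2) * (\<Sum>j\<in>(Basis::'a set). (x \<bullet> j)\<^sup>2)"
      by (rule sum_distrib_left[symmetric])
    finally show ?thesis by (simp add: n)
  qed
  finally show ?thesis by (simp add: gdens_def)
qed

lemma nn_integral_gdens:
  assumes b: "0 < b"
  shows "(\<integral>\<^sup>+x. ennreal (gdens b (x::'a::euclidean_space)) \<partial>lborel) = 1"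
proof -
  have e: "ennreal (gdens b x) = (\<Prod>j\<in>Basis. ennreal (normal_density 0 (1 / sqrt b) (x \<bullet> j)))" for x :: 'a
    by (simp add: gdens_prod[OF b, symmetric] prod_ennreal)
  have "(\<integral>\<^sup>+x. ennreal (gdens b (x::'a)) \<partial>lborel)
      = (\<integral>\<^sup>+x. (\<Prod>j\<in>Basis. ennreal (normal_density 0 (1 / sqrt b) ((x::'a) \<bullet> j))) \<partial>lborel)"
    by (rule nn_integral_cong) (rule e)
  also have "\<dots> = (\<Prod>j\<in>(Basis::'a set). \<integral>\<^sup>+t. ennreal (normal_density 0 (1 / sqrt b) t) \<partial>lborel)"
    by (rule nn_integral_lborel_prod) auto
  also have "\<dots> = 1"
  proof -
    have "(\<integral>\<^sup>+t. ennreal (normal_density 0 (1 / sqrt b) t) \<partial>lborel) = 1"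
      using b by (subst nn_integral_eq_integral) auto
    then show ?thesis by simp
  qed
  finally show ?thesis .
qed

definition gnu :: "real \<Rightarrow> 'a::euclidean_space measure" where
  "gnu b = density lborel (\<lambda>x. ennreal (gdens b x))"

lemma space_gnu[simp]: "space (gnu b) = UNIV" and sets_gnu[simp, measurable_cong]: "sets (gnu b) = sets borel"
  by (simp_all add: gnu_def)

lemma prob_space_gnu: "0 < b \<Longrightarrow> prob_space (gnu b)"
  by (rule prob_spaceI) (simp add: gnu_def emeasure_density nn_integral_gdens)

lemma nn_integral_translate:
  fixes c :: "'a::euclidean_space"
  assumes [measurable]: "f \<in> borel_measurable borel"
  shows "(\<integral>\<^sup>+x. f (x + c) \<partial>lborel) = (\<integral>\<^sup>+x. f x \<partial>lborel)"
proof -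
  have "(\<integral>\<^sup>+x. f x \<partial>lborel) = (\<integral>\<^sup>+x. f x \<partial>distr lborel borel ((+) c))"
    by (simp add: lborel_distr_plus)
  also have "\<dots> = (\<integral>\<^sup>+x. f (c + x) \<partial>lborel)"
    by (simp add: nn_integral_distr)
  finally show ?thesis by (simp add: add.commute)
qed

lemma lborel_distr_uminus_eucl: "distr lborel borel uminus = (lborel :: 'a::euclidean_space measure)"
  by (subst lborel_affine[of "-1" 0]) (auto simp: density_1 one_ennreal_def[symmetric])

lemma gdens_shift:
  fixes x c :: "'a::euclidean_space"
  shows "gdens b (x + c) = gdens b x * exp (- b * (x \<bullet> c) - b * (norm c)\<^sup>2 / 2)"
proof -
  have "(norm (x + c))\<^sup>2 = (norm x)\<^sup>2 + 2 * (x \<bullet> c) + (norm c)\<^sup>2"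
    by (simp add: power2_norm_eq_inner algebra_simps inner_commute)
  then have "- b * (norm (x + c))\<^sup>2 / 2 = - b * ((norm x)\<^sup>2 + 2 * (x \<bullet> c) + (norm c)\<^sup>2) / 2"
    by (simp only:)
  also have "\<dots> = - b * (norm x)\<^sup>2 / 2 + (- b * (x \<bullet> c) - b * (norm c)\<^sup>2 / 2)"
    by (simp add: field_simps)
  finally have "- b * (norm (x + c))\<^sup>2 / 2 = - b * (norm x)\<^sup>2 / 2 + (- b * (x \<bullet> c) - b * (norm c)\<^sup>2 / 2)" .
  then show ?thesis
    by (simp only: gdens_def exp_add mult.assoc)
qed

lemma nn_integral_gnu_shift:
  fixes c :: "'a::euclidean_space"
  assumes [measurable]: "f \<in> borel_measurable borel" and b: "0 < b"
  shows "(\<integral>\<^sup>+x. f x \<partial>gnu b) = (\<integral>\<^sup>+y. f (y + c) * ennreal (exp (- b * (y \<bullet> c) - b * (norm c)\<^sup>2 / 2)) \<partial>gnu b)"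
proof -
  have "(\<integral>\<^sup>+x. f x \<partial>gnu b) = (\<integral>\<^sup>+x. ennreal (gdens b x) * f x \<partial>lborel)"
    by (simp add: gnu_def nn_integral_density)
  also have "\<dots> = (\<integral>\<^sup>+y. ennreal (gdens b (y + c)) * f (y + c) \<partial>lborel)"
    by (rule nn_integral_translate[symmetric]) measurable
  also have "\<dots> = (\<integral>\<^sup>+y. ennreal (gdens b y) * (f (y + c) * ennreal (exp (- b * (y \<bullet> c) - b * (norm c)\<^sup>2 / 2))) \<partial>lborel)"
  proof (intro nn_integral_cong)
    fix y :: 'a
    have "ennreal (gdens b (y + c)) = ennreal (gdens b y) * ennreal (exp (- b * (y \<bullet> c) - b * (norm c)\<^sup>2 / 2))"
      by (simp add: gdens_shift ennreal_mult less_imp_le[OF gdens_pos[OF b]])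
    then show "ennreal (gdens b (y + c)) * f (y + c) = ennreal (gdens b y) * (f (y + c) * ennreal (exp (- b * (y \<bullet> c) - b * (norm c)\<^sup>2 / 2)))"
      by (simp add: ac_simps)
  qed
  also have "\<dots> = (\<integral>\<^sup>+y. f (y + c) * ennreal (exp (- b * (y \<bullet> c) - b * (norm c)\<^sup>2 / 2)) \<partial>gnu b)"
    by (simp add: gnu_def nn_integral_density)
  finally show ?thesis .
qed

lemma nn_integral_gnu_mgf:
  fixes v :: "'a::euclidean_space" assumes b: "0 < b"
  shows "(\<integral>\<^sup>+x. ennreal (exp (v \<bullet> x)) \<partial>gnu b) = ennreal (exp ((norm v)\<^sup>2 / (2 * b)))"
proof -
  have eq: "gdens b x * exp (v \<bullet> x) = exp ((norm v)\<^sup>2 / (2 * b)) * gdens b (x + (- (1/b) *\<^sub>R v))" for x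
  proof -
    have "gdens b (x + (- (1/b) *\<^sub>R v)) = gdens b x * exp (- b * (x \<bullet> (- (1/b) *\<^sub>R v)) - b * (norm (- (1/b) *\<^sub>R v))\<^sup>2 / 2)"
      by (rule gdens_shift)
    also have "- b * (x \<bullet> (- (1/b) *\<^sub>R v)) - b * (norm (- (1/b) *\<^sub>R v))\<^sup>2 / 2 = v \<bullet> x - (norm v)\<^sup>2 / (2 * b)"
      using b by (simp add: inner_commute power_mult_distrib power2_eq_square field_simps)
    finally show ?thesis by (simp add: exp_diff field_simps)
  qed
  have "(\<integral>\<^sup>+x. ennreal (exp (v \<bullet> x)) \<partial>gnu b) = (\<integral>\<^sup>+x. ennreal (gdens b x * exp (v \<bullet> x)) \<partial>lborel)"
    by (simp add: gnu_def nn_integral_density ennreal_mult less_imp_le[OF gdens_pos[OF b]])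
  also have "\<dots> = (\<integral>\<^sup>+x. ennreal (exp ((norm v)\<^sup>2 / (2 * b))) * ennreal (gdens b (x + (- (1/b) *\<^sub>R v))) \<partial>lborel)"
    by (intro nn_integral_cong) (simp add: eq ennreal_mult less_imp_le[OF gdens_pos[OF b]])
  also have "\<dots> = ennreal (exp ((norm v)\<^sup>2 / (2 * b))) * (\<integral>\<^sup>+x. ennreal (gdens b (x + (- (1/b) *\<^sub>R v))) \<partial>lborel)"
    by (rule nn_integral_cmult) measurable
  also have "(\<integral>\<^sup>+x. ennreal (gdens b (x + (- (1/b) *\<^sub>R v))) \<partial>lborel) = 1"
    using nn_integral_translate[of "\<lambda>x. ennreal (gdens b x)" "- (1/b) *\<^sub>R v"] nn_integral_gdens[OF b] by simp
  finally show ?thesis by simp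
qed

lemma integrable_gnu_inner:
  fixes v :: "'a::euclidean_space" assumes b: "0 < b"
  shows "integrable (gnu b) (\<lambda>x. v \<bullet> x)"
proof (rule integrableI_bounded)
  show "(\<lambda>x. v \<bullet> x) \<in> borel_measurable (gnu b)" by measurable
  have "(\<integral>\<^sup>+x. ennreal (norm (v \<bullet> x)) \<partial>gnu b) \<le> (\<integral>\<^sup>+x. ennreal (exp (v \<bullet> x)) + ennreal (exp ((-v) \<bullet> x)) \<partial>gnu b)"
  proof (intro nn_integral_mono)
    fix x
    have "\<bar>v \<bullet> x\<bar> \<le> exp (v \<bullet> x) + exp ((-v) \<bullet> x)"
    proof -
      have 1: "1 + v \<bullet> x \<le> exp (v \<bullet> x)" "1 + - (v \<bullet> x) \<le> exp (- (v \<bullet> x))"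
        using exp_ge_add_one_self by blast+
      have 2: "0 < exp (v \<bullet> x)" "0 < exp (- (v \<bullet> x))" by auto
      have 3: "(-v) \<bullet> x = - (v \<bullet> x)" by simp
      show ?thesis unfolding abs_le_iff 3 using 1 2 by linarith
    qed
    then show "ennreal (norm (v \<bullet> x)) \<le> ennreal (exp (v \<bullet> x)) + ennreal (exp ((-v) \<bullet> x))"
      by (simp add: ennreal_plus[symmetric] del: ennreal_plus)
  qed
  also have "\<dots> = (\<integral>\<^sup>+x. ennreal (exp (v \<bullet> x)) \<partial>gnu b) + (\<integral>\<^sup>+x. ennreal (exp ((-v) \<bullet> x)) \<partial>gnu b)"
    by (rule nn_integral_add) auto
  also have "\<dots> < \<infinity>" using nn_integral_gnu_mgf[OF b, of "-v"] by (simp add: nn_integral_gnu_mgf[OF b])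
  finally show "(\<integral>\<^sup>+x. ennreal (norm (v \<bullet> x)) \<partial>gnu b) < \<infinity>" .
qed

lemma integral_gnu_inner:
  fixes v :: "'a::euclidean_space" assumes b: "0 < b"
  shows "(\<integral>x. v \<bullet> x \<partial>gnu b) = 0"
proof -
  have I: "(\<integral>x. v \<bullet> x \<partial>gnu b) = (\<integral>x. gdens b x * (v \<bullet> x) \<partial>lborel)"
    unfolding gnu_def by (subst integral_density) (auto intro!: AE_I2 less_imp_le gdens_pos b)
  also have "\<dots> = (\<integral>x. gdens b x * (v \<bullet> x) \<partial>distr lborel borel uminus)"
    by (simp add: lborel_distr_uminus_eucl)
  also have "\<dots> = (\<integral>x. gdens b (-x) * (v \<bullet> (-x)) \<partial>lborel)"
    by (rule integral_distr) auto
  also have "\<dots> = - (\<integral>x. gdens b x * (v \<bullet> x) \<partial>lborel)"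
    by (simp add: gdens_def)
  finally show ?thesis using I by simp
qed



lemma thresh_measurable[measurable]: "thresh lam \<in> borel_measurable (borel :: 'a::euclidean_space measure)"
  unfolding thresh_def[abs_def] psi_def by measurable

lemma norm_thresh: assumes l: "0 < lam" shows "norm (thresh lam x) \<le> 1 / lam"
proof (cases "x = 0")
  case True then show ?thesis using l by (simp add: thresh_def)
next
  case False
  have "norm (thresh lam x) = min (lam * norm x) 1 / (lam * norm x) * norm x"
    using False l by (simp add: thresh_def psi_def)
  also have "\<dots> = min (lam * norm x) 1 / lam" using False l by (simp add: field_simps)
  also have "\<dots> \<le> 1 / lam" using l by (intro divide_right_mono) auto
  finally show ?thesis .
qed


lemma (in finite_measure) integrable_bounded_real:
  fixes f :: "_ \<Rightarrow> real"
  assumes "f \<in> borel_measurable M" "\<And>x. \<bar>f x\<bar> \<le> B"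
  shows "integrable M f"
  using assms by (intro integrable_const_bound[where B=B] AE_I2) auto

lemma arith_final:
  fixes lam mu beta n L G E V1 V2 :: real
  assumes "0 < lam" "0 < mu" "0 < beta" "0 < n"
  shows "(L + beta / 2 + n * (G * (mu * lam)\<^sup>2 / 2 * V1 + E * (mu * lam)\<^sup>2 / (2 * beta) * V2)) / (mu * lam * n)
    = G * (mu * lam / 2) * V1 + E * (mu * lam / (2 * beta)) * V2 + (beta + 2 * L) / (2 * mu * lam * n)"
  using assms by (simp add: field_simps power2_eq_square)

theorem mainTheorem2:
  fixes M :: "'s measure" and X :: "'s \<Rightarrow> 'a::euclidean_space"
    and Xs :: "nat \<Rightarrow> 's \<Rightarrow> 'a" and n :: nat
    and lam mu beta delta :: real
  assumes "prob_space M"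
    and "integrable M X"
    and "prob_space.indep_vars M (\<lambda>_. borel) Xs {1..n}"
    and "\<And>i. i \<in> {1..n} \<Longrightarrow> distr M borel (Xs i) = distr M borel X"
    and "n > 0"
    and "lam > 0" and "mu > 0" and "beta > 0"
    and "0 < delta" and "delta < 1"
  shows "\<exists>A \<in> sets M. measure M A \<ge> 1 - delta \<and>
    (\<forall>\<omega> \<in> A. \<forall>\<theta>::'a. norm \<theta> = 1 \<longrightarrow>
      (let mt = (\<integral>\<omega>'. thresh lam (X \<omega>') \<partial>M);
           mh = (1 / real n) *\<^sub>R (\<Sum>i=1..n. thresh lam (Xs i \<omega>))
       in \<theta> \<bullet> (mh - mt) = (1 / real n) * (\<Sum>i=1..n. \<theta> \<bullet> (thresh lam (Xs i \<omega>) - mt))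
        \<and> \<theta> \<bullet> (mh - mt) \<le>
            g2 (2 * mu) * (mu * lam / 2) * (\<integral>\<omega>'. (\<theta> \<bullet> (thresh lam (X \<omega>') - mt))\<^sup>2 \<partial>M)
          + exp (2 * mu) * g1 (2 * mu\<^sup>2 / beta) * (mu * lam / (2 * beta))
              * (\<integral>\<omega>'. (norm (thresh lam (X \<omega>') - mt))\<^sup>2 \<partial>M)
          + (beta + 2 * ln (1 / delta)) / (2 * mu * lam * real n)))"
proof -
  interpret M: prob_space M by fact
  interpret G: prob_space "gnu beta :: 'a measure" using prob_space_gnu assms(8) .
  have [simp]: "measure M (space M) = 1" by (rule M.prob_space)
  have [simp]: "measure (gnu beta :: 'a measure) UNIV = 1" using G.prob_space by simp
  interpret MG: pair_sigma_finite M "gnu beta :: 'a measure" ..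
  interpret GM: pair_sigma_finite "gnu beta :: 'a measure" M ..
  have lam: "0 < lam" and mu: "0 < mu" and bet: "0 < beta" and del: "0 < delta" using assms by auto
  have [measurable]: "X \<in> borel_measurable M" using assms(2) by (rule borel_measurable_integrable)
  have Xsm: "Xs i \<in> borel_measurable M" if "i \<in> {1..n}" for i
    using assms(3) that unfolding M.indep_vars_def by auto
  define a where "a = mu * lam"
  have a: "0 < a" using lam mu by (simp add: a_def)
  define mt where "mt = (\<integral>\<omega>'. thresh lam (X \<omega>') \<partial>M)"
  define w where "w z = thresh lam z - mt" for z
  have wm[measurable]: "w \<in> borel_measurable borel" unfolding w_def[abs_def] by measurable
  have intY: "integrable M (\<lambda>\<omega>. thresh lam (X \<omega>))"
    by (rule M.integrable_const_bound[where B="1/lam"]) (auto simp: norm_thresh lam)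
  have nmt: "norm mt \<le> 1 / lam"
  proof -
    have "norm mt \<le> (\<integral>\<omega>. norm (thresh lam (X \<omega>)) \<partial>M)" unfolding mt_def by (rule integral_norm_bound)
    also have "\<dots> \<le> (\<integral>\<omega>. 1 / lam \<partial>M)"
      by (intro integral_mono) (auto simp: norm_thresh lam intY)
    finally show ?thesis by (simp add: M.prob_space)
  qed
  have nw: "norm (w z) \<le> 2 / lam" for z
  proof -
    have "norm (w z) \<le> norm (thresh lam z) + norm mt" unfolding w_def by (rule norm_triangle_ineq4)
    also have "\<dots> \<le> 1 / lam + 1 / lam" using norm_thresh[OF lam, of z] nmt by simp
    finally show ?thesis by simp
  qed
  have intw: "integrable M (\<lambda>\<omega>. w (X \<omega>))" unfolding w_def
    by (intro Bochner_Integration.integrable_diff intY) simp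
  have intwv: "integrable M (\<lambda>\<omega>. v \<bullet> w (X \<omega>))" for v using intw by (rule integrable_inner_right)
  have Ew0: "(\<integral>\<omega>. v \<bullet> w (X \<omega>) \<partial>M) = 0" for v
  proof -
    have "(\<integral>\<omega>. v \<bullet> w (X \<omega>) \<partial>M) = (\<integral>\<omega>. v \<bullet> thresh lam (X \<omega>) \<partial>M) - (\<integral>\<omega>. v \<bullet> mt \<partial>M)"
      unfolding w_def inner_diff_right by (rule Bochner_Integration.integral_diff) (auto intro!: integrable_inner_right intY)
    also have "\<dots> = 0" using intY by (simp add: mt_def M.prob_space)
    finally show ?thesis .
  qed
  define EU where "EU x = (\<integral>\<omega>. exp (a * (x \<bullet> w (X \<omega>))) \<partial>M)" for x :: 'a
  have EUm[measurable]: "EU \<in> borel_measurable borel"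
    unfolding EU_def[abs_def] by measurable
  have intE: "integrable M (\<lambda>\<omega>. exp (a * (x \<bullet> w (X \<omega>))))" for x
  proof (rule M.integrable_const_bound[where B="exp (a * (norm x * (2 / lam)))"])
    show "AE \<omega> in M. norm (exp (a * (x \<bullet> w (X \<omega>)))) \<le> exp (a * (norm x * (2 / lam)))"
    proof (intro AE_I2)
      fix \<omega>
      have "x \<bullet> w (X \<omega>) \<le> norm x * norm (w (X \<omega>))" by (rule norm_cauchy_schwarz)
      also have "\<dots> \<le> norm x * (2 / lam)" using nw by (intro mult_left_mono) auto
      finally have "a * (x \<bullet> w (X \<omega>)) \<le> a * (norm x * (2 / lam))"
        using a by (intro mult_left_mono) auto
      then show "norm (exp (a * (x \<bullet> w (X \<omega>)))) \<le> exp (a * (norm x * (2 / lam)))"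
        by simp
    qed
  qed measurable
  have EU1: "1 \<le> EU x" for x
  proof -
    have "(\<integral>\<omega>. 1 + a * (x \<bullet> w (X \<omega>)) \<partial>M) \<le> EU x"
      unfolding EU_def by (intro integral_mono intE Bochner_Integration.integrable_add integrable_mult_right intwv) (auto simp: exp_ge_add_one_self)
    moreover have "(\<integral>\<omega>. 1 + a * (x \<bullet> w (X \<omega>)) \<partial>M) = 1"
    proof -
      have "(\<integral>\<omega>. 1 + a * (x \<bullet> w (X \<omega>)) \<partial>M) = (\<integral>\<omega>. 1 \<partial>M) + (\<integral>\<omega>. a * (x \<bullet> w (X \<omega>)) \<partial>M)"
        by (rule Bochner_Integration.integral_add) (auto intro!: integrable_mult_right intwv)
      also have "\<dots> = 1" using Ew0[of x] by simp
      finally show ?thesis .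
    qed
    ultimately show ?thesis by simp
  qed
  define T where "T \<omega> = a *\<^sub>R (\<Sum>i=1..n. w (Xs i \<omega>))" for \<omega>
  have Tm[measurable]: "T \<in> borel_measurable M"
    unfolding T_def[abs_def]
    by (intro borel_measurable_scaleR borel_measurable_const borel_measurable_sum measurable_compose[OF Xsm wm])
  define U where "U x = real n * (EU x - 1)" for x
  have Um[measurable]: "U \<in> borel_measurable borel" unfolding U_def[abs_def] by measurable
  define Z where "Z \<omega> = (\<integral>\<^sup>+x. ennreal (exp (x \<bullet> T \<omega> - U x)) \<partial>gnu beta)" for \<omega>
  have Zm[measurable]: "Z \<in> borel_measurable M" unfolding Z_def[abs_def] by measurable
  have indep: "(\<integral>\<^sup>+\<omega>. ennreal (exp (x \<bullet> T \<omega>)) \<partial>M) = ennreal (EU x) ^ n" for x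
  proof -
    have e1: "ennreal (exp (x \<bullet> T \<omega>)) = (\<Prod>i\<in>{1..n}. ennreal (exp (a * (x \<bullet> w (Xs i \<omega>)))))" for \<omega>
      by (simp add: T_def inner_sum_right sum_distrib_left exp_sum prod_ennreal)
    have "(\<integral>\<^sup>+\<omega>. ennreal (exp (x \<bullet> T \<omega>)) \<partial>M) = (\<Prod>i\<in>{1..n}. \<integral>\<^sup>+\<omega>. ennreal (exp (a * (x \<bullet> w (Xs i \<omega>)))) \<partial>M)"
      unfolding e1
      using M.indep_vars_compose2[OF assms(3), of "\<lambda>i z. ennreal (exp (a * (x \<bullet> w z)))" "\<lambda>_. borel"]
      by (intro M.indep_vars_nn_integral) auto
    also have "\<dots> = (\<Prod>i\<in>{1..n}. ennreal (EU x))"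
    proof (rule prod.cong)
      fix i assume i: "i \<in> {1..n}"
      note [measurable] = Xsm[OF i]
      have "(\<integral>\<^sup>+\<omega>. ennreal (exp (a * (x \<bullet> w (Xs i \<omega>)))) \<partial>M)
          = (\<integral>\<^sup>+z. ennreal (exp (a * (x \<bullet> w z))) \<partial>distr M borel (Xs i))"
        by (subst nn_integral_distr) auto
      also have "\<dots> = (\<integral>\<^sup>+z. ennreal (exp (a * (x \<bullet> w z))) \<partial>distr M borel X)"
        using assms(4)[OF i] by simp
      also have "\<dots> = (\<integral>\<^sup>+\<omega>. ennreal (exp (a * (x \<bullet> w (X \<omega>)))) \<partial>M)"
        by (subst nn_integral_distr) auto
      also have "\<dots> = ennreal (EU x)"
        unfolding EU_def by (rule nn_integral_eq_integral[OF intE]) auto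
      finally show "(\<integral>\<^sup>+\<omega>. ennreal (exp (a * (x \<bullet> w (Xs i \<omega>)))) \<partial>M) = ennreal (EU x)" .
    qed simp
    also have "\<dots> = ennreal (EU x) ^ n" by simp
    finally show ?thesis .
  qed
  have EZ: "(\<integral>\<^sup>+\<omega>. Z \<omega> \<partial>M) \<le> 1"
  proof -
    have "(\<integral>\<^sup>+\<omega>. Z \<omega> \<partial>M) = (\<integral>\<^sup>+x. (\<integral>\<^sup>+\<omega>. ennreal (exp (x \<bullet> T \<omega> - U x)) \<partial>M) \<partial>gnu beta)"
      unfolding Z_def by (rule MG.Fubini'[symmetric]) measurable
    also have "\<dots> \<le> (\<integral>\<^sup>+(x::'a). 1 \<partial>gnu beta)"
    proof (rule nn_integral_mono)
      fix x :: 'a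
      have "(\<integral>\<^sup>+\<omega>. ennreal (exp (x \<bullet> T \<omega> - U x)) \<partial>M) = (\<integral>\<^sup>+\<omega>. ennreal (exp (x \<bullet> T \<omega>)) * ennreal (exp (- U x)) \<partial>M)"
        by (intro nn_integral_cong) (simp add: ennreal_mult[symmetric] exp_diff exp_minus field_simps)
      also have "\<dots> = ennreal (EU x) ^ n * ennreal (exp (- U x))"
        by (subst nn_integral_multc) (auto simp: indep)
      also have "\<dots> = ennreal ((EU x * exp (1 - EU x)) ^ n)"
      proof -
        have "exp (- U x) = exp (1 - EU x) ^ n"
          unfolding U_def by (simp add: exp_of_nat_mult[symmetric] algebra_simps)
        then show ?thesis using EU1[of x]
          by (simp add: ennreal_power ennreal_mult[symmetric] power_mult_distrib)
      qed
      also have "\<dots> \<le> 1"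
      proof -
        have "EU x \<le> exp (EU x - 1)" using exp_ge_add_one_self[of "EU x - 1"] by simp
        then have "EU x * exp (1 - EU x) \<le> exp (EU x - 1) * exp (1 - EU x)"
          by (intro mult_right_mono) auto
        also have "\<dots> = 1" by (simp add: exp_add[symmetric])
        finally have "(EU x * exp (1 - EU x)) ^ n \<le> 1"
          using EU1[of x] by (intro power_le_one) auto
        then show ?thesis by simp
      qed
      finally show "(\<integral>\<^sup>+\<omega>. ennreal (exp (x \<bullet> T \<omega> - U x)) \<partial>M) \<le> 1" .
    qed
    also have "\<dots> = 1" using G.emeasure_space_1 by simp
    finally show ?thesis .
  qed
  define A where "A = {\<omega> \<in> space M. ennreal delta * Z \<omega> < 1}"
  have Am: "A \<in> sets M" unfolding A_def by measurable
  have "emeasure M {\<omega>\<in>space M. 1 \<le> ennreal delta * Z \<omega>} \<le> ennreal delta * (\<integral>\<^sup>+\<omega>. Z \<omega> * indicator (space M) \<omega> \<partial>M)"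
    by (rule nn_integral_Markov_inequality) auto
  also have "(\<integral>\<^sup>+\<omega>. Z \<omega> * indicator (space M) \<omega> \<partial>M) = (\<integral>\<^sup>+\<omega>. Z \<omega> \<partial>M)"
    by (intro nn_integral_cong) auto
  also have "ennreal delta * (\<integral>\<^sup>+\<omega>. Z \<omega> \<partial>M) \<le> ennreal delta * 1"
    by (intro mult_left_mono EZ) auto
  finally have "emeasure M {\<omega>\<in>space M. 1 \<le> ennreal delta * Z \<omega>} \<le> ennreal delta" by simp
  moreover have "space M - A = {\<omega>\<in>space M. 1 \<le> ennreal delta * Z \<omega>}"
    unfolding A_def by (auto simp: not_less)
  ultimately have "emeasure M (space M - A) \<le> ennreal delta" by simp
  then have "measure M (space M - A) \<le> delta"
    using del by (simp add: M.emeasure_eq_measure)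
  then have PA: "measure M A \<ge> 1 - delta"
    using M.prob_compl[OF Am] by simp
  have det: "\<theta> \<bullet> (T \<omega>) < ln (1 / delta) + beta / 2 + real n * (g2 (2 * mu) * a\<^sup>2 / 2 * (\<integral>\<omega>'. (\<theta> \<bullet> w (X \<omega>'))\<^sup>2 \<partial>M)
        + exp (2 * mu) * g1 (2 * mu\<^sup>2 / beta) * a\<^sup>2 / (2 * beta) * (\<integral>\<omega>'. (norm (w (X \<omega>')))\<^sup>2 \<partial>M))"
    if \<omega>: "\<omega> \<in> A" and th: "norm \<theta> = 1" for \<omega> \<theta>

  proof -
    have ZA: "ennreal delta * Z \<omega> < 1" using \<omega> by (simp add: A_def)
    obtain r where r: "Z \<omega> = ennreal r" "0 \<le> r"
    proof (cases "Z \<omega>" rule: ennreal_cases)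
      case top
      then show ?thesis using ZA del by (simp add: ennreal_mult_top)
    qed auto
    have rd: "delta * r < 1"
      using ZA r del by (simp add: ennreal_mult[symmetric] ennreal_less_iff)
    define W where "W \<omega>' = w (X \<omega>')" for \<omega>'
    have Wm[measurable]: "W \<in> borel_measurable M" unfolding W_def[abs_def] by measurable
    have nW: "norm (W \<omega>') \<le> 2 / lam" for \<omega>' unfolding W_def by (rule nw)
    have thW: "\<bar>\<theta> \<bullet> W \<omega>'\<bar> \<le> norm (W \<omega>')" for \<omega>'
      using Cauchy_Schwarz_ineq2[of \<theta> "W \<omega>'"] th by simp
    define Q where "Q \<omega>' = exp (a * (\<theta> \<bullet> W \<omega>')) * exp ((norm (a *\<^sub>R W \<omega>'))\<^sup>2 / (2 * beta))" for \<omega>'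
    have Qm[measurable]: "Q \<in> borel_measurable M" unfolding Q_def[abs_def] by measurable
    have sle: "a * (\<theta> \<bullet> W \<omega>') \<le> 2 * mu" for \<omega>'
    proof -
      have "a * (\<theta> \<bullet> W \<omega>') \<le> a * (2 / lam)"
        using thW[of \<omega>'] nW[of \<omega>'] a by (intro mult_left_mono) auto
      then show ?thesis using lam by (simp add: a_def)
    qed
    have tle: "(norm (a *\<^sub>R W \<omega>'))\<^sup>2 / (2 * beta) \<le> 2 * mu\<^sup>2 / beta" for \<omega>'
    proof -
      have "a * norm (W \<omega>') \<le> a * (2 / lam)" using nW[of \<omega>'] a by (intro mult_left_mono) auto
      then have "norm (a *\<^sub>R W \<omega>') \<le> a * (2 / lam)" using a by simp
      then have "(norm (a *\<^sub>R W \<omega>'))\<^sup>2 \<le> (a * (2 / lam))\<^sup>2" by (intro power_mono) auto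
      also have "(a * (2 / lam))\<^sup>2 = 4 * mu\<^sup>2" using lam by (simp add: a_def power2_eq_square field_simps)
      finally show ?thesis using bet by (simp add: field_simps)
    qed
    have Qb: "\<bar>Q \<omega>'\<bar> \<le> exp (2 * mu) * exp (2 * mu\<^sup>2 / beta)" for \<omega>'
      unfolding Q_def using sle[of \<omega>'] tle[of \<omega>'] by (simp add: abs_mult mult_mono)
    have intQ: "integrable M Q" by (rule M.integrable_bounded_real[OF Qm Qb])
    have EUnn: "ennreal (EU x) = (\<integral>\<^sup>+\<omega>'. ennreal (exp (a * (x \<bullet> W \<omega>'))) \<partial>M)" for x
      unfolding EU_def W_def by (rule nn_integral_eq_integral[OF intE, symmetric]) auto
    have EUQ: "(\<integral>\<^sup>+y. ennreal (EU (y + \<theta>)) \<partial>gnu beta) = (\<integral>\<^sup>+\<omega>'. ennreal (Q \<omega>') \<partial>M)"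
    proof -
      have "(\<integral>\<^sup>+y. ennreal (EU (y + \<theta>)) \<partial>gnu beta)
          = (\<integral>\<^sup>+y. (\<integral>\<^sup>+\<omega>'. ennreal (exp (a * ((y + \<theta>) \<bullet> W \<omega>'))) \<partial>M) \<partial>gnu beta)"
        by (simp add: EUnn)
      also have "\<dots> = (\<integral>\<^sup>+\<omega>'. (\<integral>\<^sup>+y. ennreal (exp (a * ((y + \<theta>) \<bullet> W \<omega>'))) \<partial>gnu beta) \<partial>M)"
        by (rule MG.Fubini') measurable
      also have "\<dots> = (\<integral>\<^sup>+\<omega>'. ennreal (Q \<omega>') \<partial>M)"
      proof (rule nn_integral_cong)
        fix \<omega>'
        have "(\<integral>\<^sup>+y. ennreal (exp (a * ((y + \<theta>) \<bullet> W \<omega>'))) \<partial>gnu beta)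
            = (\<integral>\<^sup>+y. ennreal (exp ((a *\<^sub>R W \<omega>') \<bullet> y)) * ennreal (exp (a * (\<theta> \<bullet> W \<omega>'))) \<partial>gnu beta)"
          by (intro nn_integral_cong) (simp add: ennreal_mult[symmetric] exp_add[symmetric] inner_add_left inner_commute algebra_simps)
        also have "\<dots> = ennreal (exp ((norm (a *\<^sub>R W \<omega>'))\<^sup>2 / (2 * beta))) * ennreal (exp (a * (\<theta> \<bullet> W \<omega>')))"
          using nn_integral_gnu_mgf[OF bet, of "a *\<^sub>R W \<omega>'"] by (subst nn_integral_multc) auto
        also have "\<dots> = ennreal (Q \<omega>')" by (simp add: Q_def ennreal_mult[symmetric] mult.commute)
        finally show "(\<integral>\<^sup>+y. ennreal (exp (a * ((y + \<theta>) \<bullet> W \<omega>'))) \<partial>gnu beta) = ennreal (Q \<omega>')" .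
      qed
      finally show ?thesis .
    qed
    have QnnI: "(\<integral>\<^sup>+\<omega>'. ennreal (Q \<omega>') \<partial>M) = ennreal (\<integral>\<omega>'. Q \<omega>' \<partial>M)"
      by (rule nn_integral_eq_integral[OF intQ]) (auto simp: Q_def)
    have intEU: "integrable (gnu beta) (\<lambda>y. EU (y + \<theta>))"
      by (rule integrableI_nonneg) (auto intro!: AE_I2 order_trans[OF zero_le_one EU1] simp: EUQ QnnI)
    have IEU: "(\<integral>y. EU (y + \<theta>) \<partial>gnu beta) = (\<integral>\<omega>'. Q \<omega>' \<partial>M)"
    proof -
      have "(\<integral>y. EU (y + \<theta>) \<partial>gnu beta) = enn2real (\<integral>\<^sup>+y. ennreal (EU (y + \<theta>)) \<partial>gnu beta)"
        by (rule integral_eq_nn_integral) (auto intro!: AE_I2 order_trans[OF zero_le_one EU1])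
      also have "\<dots> = (\<integral>\<omega>'. Q \<omega>' \<partial>M)"
        unfolding EUQ QnnI by (rule enn2real_ennreal) (auto intro!: integral_nonneg simp: Q_def)
      finally show ?thesis .
    qed
    define u where "u y = (T \<omega> - beta *\<^sub>R \<theta>) \<bullet> y + (\<theta> \<bullet> T \<omega> + real n - beta / 2) - real n * EU (y + \<theta>)" for y
    have um[measurable]: "u \<in> borel_measurable borel" unfolding u_def[abs_def] by measurable
    have Zu: "Z \<omega> = (\<integral>\<^sup>+y. ennreal (exp (u y)) \<partial>gnu beta)"
    proof -
      have "Z \<omega> = (\<integral>\<^sup>+y. ennreal (exp ((y + \<theta>) \<bullet> T \<omega> - U (y + \<theta>))) * ennreal (exp (- beta * (y \<bullet> \<theta>) - beta * (norm \<theta>)\<^sup>2 / 2)) \<partial>gnu beta)"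
        unfolding Z_def by (rule nn_integral_gnu_shift[OF _ bet]) measurable
      also have "\<dots> = (\<integral>\<^sup>+y. ennreal (exp (u y)) \<partial>gnu beta)"
        by (intro nn_integral_cong)
           (simp add: ennreal_mult[symmetric] exp_add[symmetric] th u_def U_def inner_add_left inner_commute algebra_simps)
      finally show ?thesis .
    qed
    have intu: "integrable (gnu beta) u"
      unfolding u_def
      by (intro Bochner_Integration.integrable_diff Bochner_Integration.integrable_add integrable_gnu_inner[OF bet]
            integrable_mult_right intEU G.integrable_const)
    define I where "I = (\<integral>y. u y \<partial>gnu beta)"
    have Ival: "I = \<theta> \<bullet> T \<omega> - real n * ((\<integral>\<omega>'. Q \<omega>' \<partial>M) - 1) - beta / 2"
    proof -
      have "I = (\<integral>y. (T \<omega> - beta *\<^sub>R \<theta>) \<bullet> y \<partial>gnu beta) + (\<theta> \<bullet> T \<omega> + real n - beta / 2) - real n * (\<integral>y. EU (y + \<theta>) \<partial>gnu beta)"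
        unfolding I_def u_def
        by (subst Bochner_Integration.integral_diff Bochner_Integration.integral_add;
            auto intro!: Bochner_Integration.integrable_add integrable_gnu_inner[OF bet] integrable_mult_right intEU G.integrable_const simp: G.prob_space)+
      moreover have "(\<integral>y. (T \<omega> - beta *\<^sub>R \<theta>) \<bullet> y \<partial>gnu beta) = 0" by (rule integral_gnu_inner[OF bet])
      ultimately show ?thesis by (simp add: IEU algebra_simps)
    qed
    have intexp: "integrable (gnu beta) (\<lambda>y. exp (u y))"
      by (rule integrableI_nonneg) (auto simp: Zu[symmetric] r)
    have "exp I \<le> (\<integral>y. exp (u y) \<partial>gnu beta)"
    proof -
      have "(\<integral>y. exp I * (1 + u y - I) \<partial>gnu beta) \<le> (\<integral>y. exp (u y) \<partial>gnu beta)"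
      proof (rule integral_mono)
        show "integrable (gnu beta) (\<lambda>y. exp I * (1 + u y - I))"
          by (intro integrable_mult_right Bochner_Integration.integrable_diff Bochner_Integration.integrable_add intu G.integrable_const)
        fix y
        have "1 + (u y - I) \<le> exp (u y - I)" by (rule exp_ge_add_one_self)
        then have "exp I * (1 + (u y - I)) \<le> exp I * exp (u y - I)" by (intro mult_left_mono) auto
        then show "exp I * (1 + u y - I) \<le> exp (u y)" by (simp add: exp_diff add_diff_eq)
      qed (rule intexp)
      moreover have "(\<integral>y. exp I * (1 + u y - I) \<partial>gnu beta) = exp I"
      proof -
        have "(\<integral>y. 1 + u y - I \<partial>gnu beta) = (\<integral>y. 1 + u y \<partial>gnu beta) - (\<integral>(y::'a). I \<partial>gnu beta)"
          by (rule Bochner_Integration.integral_diff) (auto intro!: Bochner_Integration.integrable_add intu G.integrable_const)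
        also have "(\<integral>y. 1 + u y \<partial>gnu beta) = (\<integral>(y::'a). 1 \<partial>gnu beta) + I"
          unfolding I_def by (rule Bochner_Integration.integral_add) (auto intro: intu G.integrable_const)
        finally have "(\<integral>y. 1 + u y - I \<partial>gnu beta) = 1" by (simp add: G.prob_space)
        then show ?thesis by simp
      qed
      ultimately show ?thesis by simp
    qed
    also have "(\<integral>y. exp (u y) \<partial>gnu beta) = r"
      by (subst integral_eq_nn_integral) (auto simp: Zu[symmetric] r)
    finally have "exp I \<le> r" .
    also have "r < 1 / delta" using rd del by (simp add: field_simps)
    finally have "exp I < exp (ln (1 / delta))" using del by simp
    then have Ilt: "I < ln (1 / delta)" by simp
    define R where "R = g2 (2 * mu) * a\<^sup>2 / 2 * (\<integral>\<omega>'. (\<theta> \<bullet> W \<omega>')\<^sup>2 \<partial>M)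
        + exp (2 * mu) * g1 (2 * mu\<^sup>2 / beta) * a\<^sup>2 / (2 * beta) * (\<integral>\<omega>'. (norm (W \<omega>'))\<^sup>2 \<partial>M)"
    have QR: "(\<integral>\<omega>'. Q \<omega>' \<partial>M) - 1 \<le> R"
    proof -
      have i1: "integrable M (\<lambda>\<omega>'. (\<theta> \<bullet> W \<omega>')\<^sup>2)"
      proof (rule M.integrable_bounded_real[where B="(2/lam)\<^sup>2"])
        fix x
        have h: "\<bar>\<theta> \<bullet> W x\<bar> \<le> 2 / lam" using thW[of x] nW[of x] by linarith
        show "\<bar>(\<theta> \<bullet> W x)\<^sup>2\<bar> \<le> (2 / lam)\<^sup>2" using power_mono[OF h abs_ge_zero, of 2] by simp
      qed measurable
      have i2: "integrable M (\<lambda>\<omega>'. (norm (W \<omega>'))\<^sup>2)"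
        by (rule M.integrable_bounded_real[where B="(2/lam)\<^sup>2"]) (auto intro!: power_mono nW)
      have i0: "integrable M (\<lambda>\<omega>'. \<theta> \<bullet> W \<omega>')" unfolding W_def by (rule intwv)
      have "(\<integral>\<omega>'. Q \<omega>' \<partial>M) - 1 = (\<integral>\<omega>'. Q \<omega>' - 1 \<partial>M)"
        using intQ by simp
      also have "\<dots> \<le> (\<integral>\<omega>'. a * (\<theta> \<bullet> W \<omega>') + (g2 (2 * mu) * a\<^sup>2 / 2) * (\<theta> \<bullet> W \<omega>')\<^sup>2
             + (exp (2 * mu) * g1 (2 * mu\<^sup>2 / beta) * a\<^sup>2 / (2 * beta)) * (norm (W \<omega>'))\<^sup>2 \<partial>M)"
      proof (rule integral_mono)
        show "integrable M (\<lambda>\<omega>'. Q \<omega>' - 1)" using intQ by simp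
        show "integrable M (\<lambda>\<omega>'. a * (\<theta> \<bullet> W \<omega>') + (g2 (2 * mu) * a\<^sup>2 / 2) * (\<theta> \<bullet> W \<omega>')\<^sup>2
             + (exp (2 * mu) * g1 (2 * mu\<^sup>2 / beta) * a\<^sup>2 / (2 * beta)) * (norm (W \<omega>'))\<^sup>2)"
          by (intro Bochner_Integration.integrable_add integrable_mult_right i0 i1 i2)
        fix \<omega>'
        have "Q \<omega>' - 1 \<le> a * (\<theta> \<bullet> W \<omega>') + g2 (2 * mu) * (a * (\<theta> \<bullet> W \<omega>'))\<^sup>2 / 2
            + exp (2 * mu) * g1 (2 * mu\<^sup>2 / beta) * ((norm (a *\<^sub>R W \<omega>'))\<^sup>2 / (2 * beta))"
          unfolding Q_def using mu sle[of \<omega>'] bet tle[of \<omega>']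
          by (intro exp_prod_bound) auto
        also have "\<dots> = a * (\<theta> \<bullet> W \<omega>') + (g2 (2 * mu) * a\<^sup>2 / 2) * (\<theta> \<bullet> W \<omega>')\<^sup>2
             + (exp (2 * mu) * g1 (2 * mu\<^sup>2 / beta) * a\<^sup>2 / (2 * beta)) * (norm (W \<omega>'))\<^sup>2"
          using a by (simp add: power_mult_distrib)
        finally show "Q \<omega>' - 1 \<le> a * (\<theta> \<bullet> W \<omega>') + (g2 (2 * mu) * a\<^sup>2 / 2) * (\<theta> \<bullet> W \<omega>')\<^sup>2
             + (exp (2 * mu) * g1 (2 * mu\<^sup>2 / beta) * a\<^sup>2 / (2 * beta)) * (norm (W \<omega>'))\<^sup>2" .
      qed
      also have "\<dots> = a * (\<integral>\<omega>'. \<theta> \<bullet> W \<omega>' \<partial>M) + (g2 (2 * mu) * a\<^sup>2 / 2) * (\<integral>\<omega>'. (\<theta> \<bullet> W \<omega>')\<^sup>2 \<partial>M)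
             + (exp (2 * mu) * g1 (2 * mu\<^sup>2 / beta) * a\<^sup>2 / (2 * beta)) * (\<integral>\<omega>'. (norm (W \<omega>'))\<^sup>2 \<partial>M)"
        using i0 i1 i2 by (simp add: Bochner_Integration.integral_add integrable_mult_right)
      also have "\<dots> = R" using Ew0[of \<theta>] by (simp add: R_def W_def)
      finally show ?thesis .
    qed
    have "\<theta> \<bullet> T \<omega> = I + real n * ((\<integral>\<omega>'. Q \<omega>' \<partial>M) - 1) + beta / 2" by (simp add: Ival)
    also have "\<dots> < ln (1 / delta) + real n * R + beta / 2"
      using Ilt QR by (intro add_strict_right_mono add_less_le_mono mult_left_mono) auto
    finally show ?thesis by (simp add: R_def W_def algebra_simps)
  qed
  show ?thesis
  proof (intro bexI[OF _ Am] conjI ballI allI impI)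
    show "measure M A \<ge> 1 - delta" by (rule PA)
    fix \<omega> and \<theta> :: 'a assume \<omega>: "\<omega> \<in> A" and th: "norm \<theta> = 1"
    note D = det[OF \<omega> th]
    define S where "S = (\<Sum>i=1..n. \<theta> \<bullet> (thresh lam (Xs i \<omega>) - mt))"
    have TS: "\<theta> \<bullet> T \<omega> = a * S" by (simp add: T_def S_def w_def inner_sum_right)
    have mhS: "\<theta> \<bullet> ((1 / real n) *\<^sub>R (\<Sum>i=1..n. thresh lam (Xs i \<omega>)) - mt) = (1 / real n) * S"
      using assms(5) by (simp add: S_def inner_diff_right inner_sum_right sum_subtractf field_simps)
    have nn: "0 < real n" using assms(5) by simp
    have "(1 / real n) * S = (\<theta> \<bullet> T \<omega>) / (a * real n)" using a nn by (simp add: TS)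
    also have "\<dots> \<le> (ln (1 / delta) + beta / 2 + real n * (g2 (2 * mu) * a\<^sup>2 / 2 * (\<integral>\<omega>'. (\<theta> \<bullet> w (X \<omega>'))\<^sup>2 \<partial>M)
        + exp (2 * mu) * g1 (2 * mu\<^sup>2 / beta) * a\<^sup>2 / (2 * beta) * (\<integral>\<omega>'. (norm (w (X \<omega>')))\<^sup>2 \<partial>M))) / (a * real n)"
      using D a nn by (intro divide_right_mono) auto
    also have "\<dots> = g2 (2 * mu) * (mu * lam / 2) * (\<integral>\<omega>'. (\<theta> \<bullet> (thresh lam (X \<omega>') - mt))\<^sup>2 \<partial>M)
          + exp (2 * mu) * g1 (2 * mu\<^sup>2 / beta) * (mu * lam / (2 * beta))
              * (\<integral>\<omega>'. (norm (thresh lam (X \<omega>') - mt))\<^sup>2 \<partial>M)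
          + (beta + 2 * ln (1 / delta)) / (2 * mu * lam * real n)"
      unfolding w_def a_def by (rule arith_final) (use lam mu bet nn in auto)
    finally show "let mt = (\<integral>\<omega>'. thresh lam (X \<omega>') \<partial>M);
           mh = (1 / real n) *\<^sub>R (\<Sum>i=1..n. thresh lam (Xs i \<omega>))
       in \<theta> \<bullet> (mh - mt) = (1 / real n) * (\<Sum>i=1..n. \<theta> \<bullet> (thresh lam (Xs i \<omega>) - mt))
        \<and> \<theta> \<bullet> (mh - mt) \<le>
            g2 (2 * mu) * (mu * lam / 2) * (\<integral>\<omega>'. (\<theta> \<bullet> (thresh lam (X \<omega>') - mt))\<^sup>2 \<partial>M)
          + exp (2 * mu) * g1 (2 * mu\<^sup>2 / beta) * (mu * lam / (2 * beta))
              * (\<integral>\<omega>'. (norm (thresh lam (X \<omega>') - mt))\<^sup>2 \<partial>M)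
          + (beta + 2 * ln (1 / delta)) / (2 * mu * lam * real n)"
      using mhS unfolding Let_def mt_def[symmetric] S_def by simp
  qed
qed
end
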